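(* Let $k,n$ be positive integers and let $G$ be a graph on $n$ vertices. Then $G\in\mathcal{F}(n,k)$ if and only if $G$ is $k$-maximal.
   Context: Graphs are finite, loopless, possibly with multiple edges. $\kappa'(G)$ is the edge connectivity and $\overline{\kappa'}(G)=\max\{\kappa'(H): H \text{ a subgraph of } G\}$. A graph $G$ is $k$-maximal if $\overline{\kappa'}(G)\le k$ but for any new edge $e\notin E(G)$ joining two vertices of $G$ (possibly parallel to an existing edge), $\overline{\kappa'}(G+e)\ge k+1$. $F(n,k)$ is the maximum number of edges of a graph on $n$ vertices with $\overline{\kappa'}\le k$, and $\mathcal{F}(n,k)=\{G: |V(G)|=n,\ \overline{\kappa'}(G)\le k,\ |E(G)|=F(n,k)\}$. *)

theory Defs
  imports Main
begin

text \<open>A finite loopless multigraph is a pair (V, m): a finite vertex set V and a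
symmetric multiplicity function m (m x y = number of edges joining x and y),
vanishing on the diagonal (no loops) and outside V.\<close>

definition multigraph :: "'a set \<Rightarrow> ('a \<Rightarrow> 'a \<Rightarrow> nat) \<Rightarrow> bool" where
  "multigraph V m \<longleftrightarrow> finite V \<and> (\<forall>x y. m x y = m y x) \<and> (\<forall>x. m x x = 0)
     \<and> (\<forall>x y. m x y \<noteq> 0 \<longrightarrow> x \<in> V \<and> y \<in> V)"

definition num_edges :: "'a set \<Rightarrow> ('a \<Rightarrow> 'a \<Rightarrow> nat) \<Rightarrow> nat" where
  "num_edges V m = (\<Sum>x\<in>V. \<Sum>y\<in>V. m x y) div 2"

definition cut_size :: "('a \<Rightarrow> 'a \<Rightarrow> nat) \<Rightarrow> 'a set \<Rightarrow> 'a set \<Rightarrow> nat" where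
  "cut_size m S T = (\<Sum>x\<in>S. \<Sum>y\<in>T. m x y)"

definition edge_conn :: "'a set \<Rightarrow> ('a \<Rightarrow> 'a \<Rightarrow> nat) \<Rightarrow> nat" where
  "edge_conn V m = (if card V \<le> 1 then 0
     else Min {cut_size m S (V - S) | S. S \<subseteq> V \<and> S \<noteq> {} \<and> S \<noteq> V})"

definition subgraph :: "'a set \<Rightarrow> ('a \<Rightarrow> 'a \<Rightarrow> nat) \<Rightarrow> 'a set \<Rightarrow> ('a \<Rightarrow> 'a \<Rightarrow> nat) \<Rightarrow> bool" where
  "subgraph W h V m \<longleftrightarrow> multigraph W h \<and> W \<subseteq> V \<and> (\<forall>x y. h x y \<le> m x y)"

text \<open>max_ec_le k V m  means  \<open>\<kappa>'-bar(G) \<le> k\<close>, i.e. every subgraph has edge connectivity at most k.\<close>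
definition max_ec_le :: "nat \<Rightarrow> 'a set \<Rightarrow> ('a \<Rightarrow> 'a \<Rightarrow> nat) \<Rightarrow> bool" where
  "max_ec_le k V m \<longleftrightarrow> (\<forall>W h. subgraph W h V m \<longrightarrow> edge_conn W h \<le> k)"

definition add_edge :: "('a \<Rightarrow> 'a \<Rightarrow> nat) \<Rightarrow> 'a \<Rightarrow> 'a \<Rightarrow> ('a \<Rightarrow> 'a \<Rightarrow> nat)" where
  "add_edge m u v = (\<lambda>x y. if (x = u \<and> y = v) \<or> (x = v \<and> y = u) then m x y + 1 else m x y)"

definition k_maximal :: "nat \<Rightarrow> 'a set \<Rightarrow> ('a \<Rightarrow> 'a \<Rightarrow> nat) \<Rightarrow> bool" where
  "k_maximal k V m \<longleftrightarrow> max_ec_le k V m \<and>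
     (\<forall>u\<in>V. \<forall>v\<in>V. u \<noteq> v \<longrightarrow> \<not> max_ec_le k V (add_edge m u v))"

text \<open>F(n,k): maximum number of edges of a graph on n vertices with \<kappa>'-bar \<le> k
(vertices taken from nat; edge numbers are invariant under relabelling).\<close>
definition F_max :: "nat \<Rightarrow> nat \<Rightarrow> nat" where
  "F_max n k = Sup {num_edges W h | W (h :: nat \<Rightarrow> nat \<Rightarrow> nat).
      multigraph W h \<and> card W = n \<and> max_ec_le k W h}"

definition in_F_family :: "nat \<Rightarrow> nat \<Rightarrow> 'a set \<Rightarrow> ('a \<Rightarrow> 'a \<Rightarrow> nat) \<Rightarrow> bool" where
  "in_F_family n k V m \<longleftrightarrow> multigraph V m \<and> card V = n \<and> max_ec_le k V m
     \<and> num_edges V m = F_max n k"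

end

theory Submission
  imports Defs
begin

definition restr :: "('a \<Rightarrow> 'a \<Rightarrow> nat) \<Rightarrow> 'a set \<Rightarrow> ('a \<Rightarrow> 'a \<Rightarrow> nat)" where
  "restr m S = (\<lambda>x y. if x \<in> S \<and> y \<in> S then m x y else 0)"

lemma cut_size_mono:
  assumes "finite C" "finite D" "A \<subseteq> C" "B \<subseteq> D" "\<And>x y. h x y \<le> g x y"
  shows "cut_size h A B \<le> cut_size g C D"
proof -
  have fA: "finite A" using assms(1,3) finite_subset by blast
  have fB: "finite B" using assms(2,4) finite_subset by blast
  have "cut_size h A B \<le> cut_size g A B"
    unfolding cut_size_def by (intro sum_mono) (simp add: assms(5))
  also have "\<dots> \<le> (\<Sum>x\<in>A. \<Sum>y\<in>D. g x y)"
    unfolding cut_size_def by (intro sum_mono sum_mono2) (use assms in auto)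
  also have "\<dots> \<le> cut_size g C D"
    unfolding cut_size_def by (intro sum_mono2) (use assms in auto)
  finally show ?thesis .
qed

lemma edge_conn_le_cut:
  assumes "finite W" "S \<subseteq> W" "S \<noteq> {}" "S \<noteq> W"
  shows "edge_conn W h \<le> cut_size h S (W - S)"
proof (cases "card W \<le> 1")
  case True then show ?thesis by (simp add: edge_conn_def)
next
  case False
  have "{cut_size h S (W - S) | S. S \<subseteq> W \<and> S \<noteq> {} \<and> S \<noteq> W} \<subseteq> (\<lambda>S. cut_size h S (W - S)) ` Pow W"
    by auto
  hence fin: "finite {cut_size h S (W - S) | S. S \<subseteq> W \<and> S \<noteq> {} \<and> S \<noteq> W}"
    using assms(1) finite_subset by blast
  show ?thesis using False unfolding edge_conn_def
    by (auto intro!: Min_le fin) (use assms in blast)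
qed

lemma edge_conn_attained:
  assumes "finite W" "2 \<le> card W"
  shows "\<exists>S. S \<subseteq> W \<and> S \<noteq> {} \<and> S \<noteq> W \<and> edge_conn W h = cut_size h S (W - S)"
proof -
  let ?A = "{cut_size h S (W - S) | S. S \<subseteq> W \<and> S \<noteq> {} \<and> S \<noteq> W}"
  have "?A \<subseteq> (\<lambda>S. cut_size h S (W - S)) ` Pow W"
    by auto
  hence fin: "finite ?A"
    using assms(1) finite_subset by blast
  obtain x where x: "x \<in> W" using assms by fastforce
  have "{x} \<noteq> W" using assms by auto
  hence ne: "?A \<noteq> {}" using x by auto
  have "edge_conn W h = Min ?A" using assms by (simp add: edge_conn_def)
  also have "Min ?A \<in> ?A" using fin ne by (rule Min_in)
  finally show ?thesis by auto
qed

lemma cut_size_union1: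
  assumes "finite A" "finite B" "A \<inter> B = {}"
  shows "cut_size m (A \<union> B) C = cut_size m A C + cut_size m B C"
  unfolding cut_size_def using assms by (simp add: sum.union_disjoint)

lemma cut_size_union2:
  assumes "finite A" "finite B" "A \<inter> B = {}"
  shows "cut_size m C (A \<union> B) = cut_size m C A + cut_size m C B"
  unfolding cut_size_def using assms by (simp add: sum.union_disjoint sum.distrib)

lemma cut_size_sym:
  assumes "\<forall>x y. m x y = m y x"
  shows "cut_size m A B = cut_size m B A"
  unfolding cut_size_def using assms by (subst sum.swap) simp

lemma cut_split:
  assumes "finite V" "S \<subseteq> V" "\<forall>x y. m x y = m y x"
  shows "cut_size m V V = cut_size m S S + cut_size m (V - S) (V - S) + 2 * cut_size m S (V - S)"
proof -
  have V: "V = S \<union> (V - S)" using assms by auto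
  have fS: "finite S" "finite (V - S)" using assms finite_subset by auto
  have d: "S \<inter> (V - S) = {}" by auto
  have "cut_size m V V = cut_size m (S \<union> (V - S)) (S \<union> (V - S))" using V by simp
  also have "\<dots> = cut_size m S S + cut_size m S (V - S) + (cut_size m (V - S) S + cut_size m (V - S) (V - S))"
    using fS d by (simp only: cut_size_union1 cut_size_union2)
  also have "cut_size m (V - S) S = cut_size m S (V - S)" using cut_size_sym[OF assms(3)] by simp
  finally show ?thesis by simp
qed

lemma subgraph_trans:
  "subgraph W h S g \<Longrightarrow> subgraph S g V m \<Longrightarrow> subgraph W h V m"
  unfolding subgraph_def by (meson le_trans order_trans)

lemma restr_facts:
  assumes "multigraph V m" "S \<subseteq> V"
  shows "multigraph S (restr m S)" "subgraph S (restr m S) V m"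
    "cut_size (restr m S) S S = cut_size m S S"
proof -
  show mg: "multigraph S (restr m S)" using assms finite_subset
    unfolding multigraph_def restr_def by auto
  show "subgraph S (restr m S) V m" using mg assms unfolding subgraph_def restr_def by auto
  show "cut_size (restr m S) S S = cut_size m S S"
    unfolding cut_size_def restr_def by simp
qed

lemma restr_max_ec:
  assumes "multigraph V m" "S \<subseteq> V" "max_ec_le k V m"
  shows "max_ec_le k S (restr m S)"
  using assms restr_facts(2)[OF assms(1,2)] subgraph_trans unfolding max_ec_le_def by blast

lemma small_cut:
  assumes "multigraph V m" "card V \<le> 1"
  shows "cut_size m V V = 0"
proof -
  have "finite V" using assms by (simp add: multigraph_def)
  then have "V = {} \<or> (\<exists>x. V = {x})" using assms
    by (metis card_0_eq card_1_singletonE le_Suc_eq le_zero_eq One_nat_def)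
  then show ?thesis using assms by (auto simp: cut_size_def multigraph_def)
qed


lemma delta2:
  assumes "finite A" "finite B"
  shows "(\<Sum>x\<in>A. \<Sum>y\<in>B. (if x = u \<and> y = v then 1 else 0::nat)) = (if u \<in> A \<and> v \<in> B then 1 else 0)"
proof -
  have "\<And>x. (\<Sum>y\<in>B. (if x = u \<and> y = v then 1 else 0::nat)) = (if x = u \<and> v \<in> B then 1 else 0)"
    using assms(2) by (cases "x = u") auto
  then show ?thesis using assms(1) by simp
qed

lemma add_edge_cut_cross:
  assumes "finite S" "finite T" "S \<inter> T = {}" "u \<in> S" "v \<in> T"
  shows "cut_size (add_edge m u v) S T = cut_size m S T + 1"
proof -
  have pt: "add_edge m u v x y = m x y + (if x = u \<and> y = v then 1 else 0)" if "x \<in> S" for x y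
  proof -
    have "x \<noteq> v" using that assms(3,5) by blast
    then show ?thesis unfolding add_edge_def by simp
  qed
  have "cut_size (add_edge m u v) S T = (\<Sum>x\<in>S. \<Sum>y\<in>T. m x y + (if x = u \<and> y = v then 1 else 0))"
    unfolding cut_size_def by (intro sum.cong refl) (simp add: pt)
  also have "\<dots> = cut_size m S T + (\<Sum>x\<in>S. \<Sum>y\<in>T. (if x = u \<and> y = v then 1 else 0))"
    unfolding cut_size_def sum.distrib by (rule refl)
  also have "\<dots> = cut_size m S T + 1"
    using delta2[OF assms(1,2), of u v] assms(4,5) by simp
  finally show ?thesis .
qed

lemma add_edge_cut_in:
  assumes "S \<inter> T = {}" "u \<in> S" "v \<in> S"
  shows "cut_size (add_edge m u v) S T = cut_size m S T"
proof -
  have pt: "add_edge m u v x y = m x y" if "y \<in> T" for x y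
  proof -
    have "y \<noteq> v" "y \<noteq> u" using that assms by blast+
    then show ?thesis unfolding add_edge_def by simp
  qed
  show ?thesis unfolding cut_size_def by (intro sum.cong refl) (simp add: pt)
qed

lemma add_edge_cut_all:
  assumes "finite V" "u \<in> V" "v \<in> V" "u \<noteq> v"
  shows "cut_size (add_edge m u v) V V = cut_size m V V + 2"
proof -
  have pt: "add_edge m u v x y = m x y + (if x = u \<and> y = v then 1 else 0) + (if x = v \<and> y = u then 1 else 0)" for x y
    using assms(4) unfolding add_edge_def by auto
  have "cut_size (add_edge m u v) V V = (\<Sum>x\<in>V. \<Sum>y\<in>V. m x y + (if x = u \<and> y = v then 1 else 0) + (if x = v \<and> y = u then 1 else 0))"
    unfolding cut_size_def pt by (rule refl)
  also have "\<dots> = cut_size m V V + (\<Sum>x\<in>V. \<Sum>y\<in>V. (if x = u \<and> y = v then 1 else 0)) + (\<Sum>x\<in>V. \<Sum>y\<in>V. (if x = v \<and> y = u then 1 else 0))"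
    unfolding cut_size_def sum.distrib by (rule refl)
  also have "\<dots> = cut_size m V V + 2"
    using delta2[OF assms(1,1), of u v] delta2[OF assms(1,1), of v u] assms(2,3) by simp
  finally show ?thesis .
qed

lemma add_edge_multigraph:
  assumes "multigraph V m" "u \<in> V" "v \<in> V" "u \<noteq> v"
  shows "multigraph V (add_edge m u v)"
  using assms unfolding multigraph_def add_edge_def by auto

lemma num_edges_cut: "num_edges V m = cut_size m V V div 2"
  by (simp add: num_edges_def cut_size_def)

lemma uses_edge:
  assumes "max_ec_le k V m" "subgraph W h V (add_edge m u v)" "\<not> edge_conn W h \<le> k"
  shows "u \<in> W \<and> v \<in> W"
proof (rule ccontr)
  assume nu: "\<not> (u \<in> W \<and> v \<in> W)"
  have mg: "multigraph W h" and WV: "W \<subseteq> V" and le: "\<And>x y. h x y \<le> add_edge m u v x y"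
    using assms(2) unfolding subgraph_def by auto
  have "h x y \<le> m x y" for x y
  proof (cases "(x = u \<and> y = v) \<or> (x = v \<and> y = u)")
    case True
    then have "h x y = 0" using nu mg unfolding multigraph_def by auto
    then show ?thesis by simp
  next
    case False
    then show ?thesis using le[of x y] unfolding add_edge_def by auto
  qed
  then have "subgraph W h V m" using mg WV by (simp add: subgraph_def)
  then show False using assms(1,3) unfolding max_ec_le_def by blast
qed

lemma arith_helper:
  fixes a b c p q x k n :: nat
  assumes "c = p + q + 2 * x" "p \<le> 2 * k * (a - 1)" "q \<le> 2 * k * (b - 1)" "x \<le> k"
    "a \<ge> 1" "b \<ge> 1" "n = a + b"
  shows "c \<le> 2 * k * (n - 1)"
proof -
  obtain a' b' where "a = Suc a'" "b = Suc b'" using assms(5,6) by (metis Suc_le_D One_nat_def)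
  then show ?thesis using assms by (simp add: algebra_simps)
qed

lemma upper_bound:
  assumes "multigraph V m" "max_ec_le k V m"
  shows "cut_size m V V \<le> 2 * k * (card V - 1)"
  using assms
proof (induction "card V" arbitrary: V m rule: less_induct)
  case less
  show ?case
  proof (cases "card V \<le> 1")
    case True then show ?thesis using small_cut less.prems by simp
  next
    case False
    have fin: "finite V" and sym: "\<forall>x y. m x y = m y x" using less.prems by (auto simp: multigraph_def)
    obtain S where S: "S \<subseteq> V" "S \<noteq> {}" "S \<noteq> V" "edge_conn V m = cut_size m S (V - S)"
      using edge_conn_attained[OF fin, of m] False by auto
    have "subgraph V m V m" using less.prems by (simp add: subgraph_def)
    then have ck: "cut_size m S (V - S) \<le> k" using S(4) less.prems(2) unfolding max_ec_le_def by metis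
    let ?T = "V - S"
    have T: "?T \<subseteq> V" "?T \<noteq> {}" using S by auto
    have fS: "finite S" "finite ?T" using fin S(1) finite_subset by auto
    have "S \<subset> V" "?T \<subset> V" using S by auto
    then have cS: "card S < card V" "card ?T < card V" "card S \<ge> 1" "card ?T \<ge> 1"
      using S T fin fS by (auto simp: psubset_card_mono card_gt_0_iff Suc_le_eq)
    have A1: "cut_size m S S \<le> 2 * k * (card S - 1)"
      using less.hyps[OF cS(1) restr_facts(1)[OF less.prems(1) S(1)] restr_max_ec[OF less.prems(1) S(1) less.prems(2)]]
        restr_facts(3)[OF less.prems(1) S(1)] by simp
    have A2: "cut_size m ?T ?T \<le> 2 * k * (card ?T - 1)"
      using less.hyps[OF cS(2) restr_facts(1)[OF less.prems(1) T(1)] restr_max_ec[OF less.prems(1) T(1) less.prems(2)]]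
        restr_facts(3)[OF less.prems(1) T(1)] by simp
    have A3: "card V = card S + card ?T" using fin S(1)
      by (metis card_Diff_subset fS(1) card_mono le_add_diff_inverse)
    show ?thesis by (rule arith_helper[OF cut_split[OF fin S(1) sym] A1 A2 ck cS(3,4) A3])
  qed
qed


lemma kmax_restr:
  assumes mg: "multigraph V m" and km: "k_maximal k V m" and SV: "S \<subseteq> V"
    and ck: "cut_size m S (V - S) \<le> k"
  shows "k_maximal k S (restr m S)"
proof -
  have me: "max_ec_le k V m" using km by (simp add: k_maximal_def)
  have finV: "finite V" using mg by (simp add: multigraph_def)
  have finS: "finite S" "finite (V - S)" using finV SV finite_subset by auto
  have "\<not> max_ec_le k S (add_edge (restr m S) u v)" if uS: "u \<in> S" and vS: "v \<in> S" and uv: "u \<noteq> v" for u v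
  proof
    assume me2: "max_ec_le k S (add_edge (restr m S) u v)"
    have "\<not> max_ec_le k V (add_edge m u v)" using km uS vS uv SV unfolding k_maximal_def by blast
    then obtain W h where sg: "subgraph W h V (add_edge m u v)" and big: "\<not> edge_conn W h \<le> k"
      unfolding max_ec_le_def by blast
    have uvW: "u \<in> W \<and> v \<in> W" using uses_edge[OF me sg big] .
    have mgW: "multigraph W h" and WV: "W \<subseteq> V" and hle: "\<And>x y. h x y \<le> add_edge m u v x y"
      using sg unfolding subgraph_def by auto
    have finW: "finite W" using mgW by (simp add: multigraph_def)
    have WS: "W \<subseteq> S"
    proof (rule ccontr)
      assume nWS: "\<not> W \<subseteq> S"
      have "edge_conn W h \<le> cut_size h (W \<inter> S) (W - W \<inter> S)"
        by (rule edge_conn_le_cut) (use finW uvW uS nWS in auto)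
      also have "\<dots> \<le> cut_size (add_edge m u v) S (V - S)"
        by (rule cut_size_mono) (use finS WV hle in auto)
      also have "\<dots> = cut_size m S (V - S)"
        by (rule add_edge_cut_in) (use uS vS in auto)
      finally show False using ck big by simp
    qed
    have "h x y \<le> add_edge (restr m S) u v x y" for x y
    proof (cases "x \<in> W \<and> y \<in> W")
      case True
      then have "x \<in> S" "y \<in> S" using WS by auto
      then have "add_edge (restr m S) u v x y = add_edge m u v x y"
        unfolding add_edge_def restr_def using uS vS by auto
      then show ?thesis using hle[of x y] by simp
    next
      case False
      then have "h x y = 0" using mgW unfolding multigraph_def by auto
      then show ?thesis by simp
    qed
    then have "subgraph W h S (add_edge (restr m S) u v)"
      using mgW WS by (simp add: subgraph_def)
    then show False using me2 big unfolding max_ec_le_def by blast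
  qed
  then show ?thesis unfolding k_maximal_def using restr_max_ec[OF mg SV me] by blast
qed

lemma arith_helper2:
  fixes a b c p q x k n :: nat
  assumes "c = p + q + 2 * x" "p = 2 * k * (a - 1)" "q = 2 * k * (b - 1)" "x = k"
    "a \<ge> 1" "b \<ge> 1" "n = a + b"
  shows "c = 2 * k * (n - 1)"
proof -
  obtain a' b' where "a = Suc a'" "b = Suc b'" using assms(5,6) by (metis Suc_le_D One_nat_def)
  then show ?thesis using assms by (simp add: algebra_simps)
qed

lemma maximal_count:
  assumes "multigraph V m" "k_maximal k V m"
  shows "cut_size m V V = 2 * k * (card V - 1)"
  using assms
proof (induction "card V" arbitrary: V m rule: less_induct)
  case less
  show ?case
  proof (cases "card V \<le> 1")
    case True then show ?thesis using small_cut less.prems by simp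
  next
    case False
    have mg: "multigraph V m" and km: "k_maximal k V m" using less.prems by auto
    have me: "max_ec_le k V m" using km by (simp add: k_maximal_def)
    have fin: "finite V" and sym: "\<forall>x y. m x y = m y x" using mg by (auto simp: multigraph_def)
    obtain S where S: "S \<subseteq> V" "S \<noteq> {}" "S \<noteq> V" "edge_conn V m = cut_size m S (V - S)"
      using edge_conn_attained[OF fin, of m] False by auto
    have "subgraph V m V m" using mg by (simp add: subgraph_def)
    then have ck: "cut_size m S (V - S) \<le> k" using S(4) me unfolding max_ec_le_def by metis
    let ?T = "V - S"
    have T: "?T \<subseteq> V" "?T \<noteq> {}" using S by auto
    have VT: "V - ?T = S" using S(1) by auto
    have ckT: "cut_size m ?T (V - ?T) \<le> k" using ck VT cut_size_sym[OF sym, of S ?T] by simp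
    have fS: "finite S" "finite ?T" using fin S(1) finite_subset by auto
    have "S \<subset> V" "?T \<subset> V" using S by auto
    then have cS: "card S < card V" "card ?T < card V" "card S \<ge> 1" "card ?T \<ge> 1"
      using S T fin fS by (auto simp: psubset_card_mono card_gt_0_iff Suc_le_eq)
    have A1: "cut_size m S S = 2 * k * (card S - 1)"
      using less.hyps[OF cS(1) restr_facts(1)[OF mg S(1)] kmax_restr[OF mg km S(1) ck]]
        restr_facts(3)[OF mg S(1)] by simp
    have A2: "cut_size m ?T ?T = 2 * k * (card ?T - 1)"
      using less.hyps[OF cS(2) restr_facts(1)[OF mg T(1)] kmax_restr[OF mg km T(1) ckT]]
        restr_facts(3)[OF mg T(1)] by simp
    have A3: "card V = card S + card ?T" using fin S(1)
      by (metis card_Diff_subset fS(1) card_mono le_add_diff_inverse)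
    obtain u where u: "u \<in> S" using S(2) by blast
    obtain v where v: "v \<in> ?T" using T(2) by blast
    have uv: "u \<noteq> v" "u \<in> V" "v \<in> V" using u v S(1) by auto
    have "\<not> max_ec_le k V (add_edge m u v)" using km uv unfolding k_maximal_def by blast
    then obtain W h where sg: "subgraph W h V (add_edge m u v)" and big: "\<not> edge_conn W h \<le> k"
      unfolding max_ec_le_def by blast
    have uvW: "u \<in> W \<and> v \<in> W" using uses_edge[OF me sg big] .
    have mgW: "multigraph W h" and WV: "W \<subseteq> V" and hle: "\<And>x y. h x y \<le> add_edge m u v x y"
      using sg unfolding subgraph_def by auto
    have finW: "finite W" using mgW by (simp add: multigraph_def)
    have "edge_conn W h \<le> cut_size h (W \<inter> S) (W - W \<inter> S)"
      by (rule edge_conn_le_cut) (use finW uvW u v in auto)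
    also have "\<dots> \<le> cut_size (add_edge m u v) S ?T"
      by (rule cut_size_mono) (use fS WV hle in auto)
    also have "\<dots> = cut_size m S ?T + 1"
      by (rule add_edge_cut_cross) (use fS u v in auto)
    finally have "k \<le> cut_size m S ?T" using big by simp
    then have ceq: "cut_size m S ?T = k" using ck by simp
    show ?thesis by (rule arith_helper2[OF cut_split[OF fin S(1) sym] A1 A2 ceq cS(3,4) A3])
  qed
qed

lemma zero_graph_max_ec:
  assumes "finite W0"
  shows "max_ec_le k W0 (\<lambda>_ _. 0::nat)"
  unfolding max_ec_le_def
proof (intro allI impI)
  fix W h assume sg: "subgraph W h W0 (\<lambda>_ _. 0::nat)"
  then have h0: "h = (\<lambda>_ _. 0)" unfolding subgraph_def by (auto intro!: ext)
  have finW: "finite W" using sg by (simp add: subgraph_def multigraph_def)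
  show "edge_conn W h \<le> k"
  proof (cases "card W \<le> 1")
    case True then show ?thesis by (simp add: edge_conn_def)
  next
    case False
    then obtain S where "edge_conn W h = cut_size h S (W - S)"
      using edge_conn_attained[OF finW, of h] by auto
    then show ?thesis by (simp add: h0 cut_size_def)
  qed
qed

lemma F_max_val: "F_max n k = k * (n - 1)"
proof -
  let ?A = "{num_edges W h | W (h :: nat \<Rightarrow> nat \<Rightarrow> nat).
      multigraph W h \<and> card W = n \<and> max_ec_le k W h}"
  have bnd: "a \<le> k * (n - 1)" if aA: "a \<in> ?A" for a
  proof -
    obtain W and h :: "nat \<Rightarrow> nat \<Rightarrow> nat" where Wh: "a = num_edges W h" "multigraph W h" "card W = n" "max_ec_le k W h"
      using aA by blast
    have "cut_size h W W \<le> 2 * k * (n - 1)" using upper_bound[OF Wh(2,4)] Wh(3) by simp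
    then have "cut_size h W W div 2 \<le> 2 * k * (n - 1) div 2" by (rule div_le_mono)
    then show ?thesis using Wh(1) by (simp add: num_edges_cut)
  qed
  have "multigraph {0..<n} (\<lambda>_ _. 0::nat)" by (simp add: multigraph_def)
  then have ne: "num_edges {0..<n} (\<lambda>_ _. 0::nat) \<in> ?A"
    unfolding mem_Collect_eq
    by (intro exI conjI refl) (use zero_graph_max_ec[of "{0..<n}" k] in simp_all)
  have "?A \<subseteq> {..k * (n - 1)}"
  proof
    fix a assume "a \<in> ?A"
    from bnd[OF this] show "a \<in> {..k * (n - 1)}" by (simp only: atMost_iff)
  qed
  then have fin: "finite ?A" by (rule finite_subset) simp
  have neA: "?A \<noteq> {}" using ne by blast
  have "Max ?A \<in> ?A" using fin neA by (rule Max_in)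
  then obtain W and h :: "nat \<Rightarrow> nat \<Rightarrow> nat" where Wh: "Max ?A = num_edges W h" "multigraph W h" "card W = n" "max_ec_le k W h"
    by blast
  have km: "k_maximal k W h"
    unfolding k_maximal_def
  proof (intro conjI ballI impI)
    show "max_ec_le k W h" by fact
  next
    fix u v assume u: "u \<in> W" and v: "v \<in> W" and uv: "u \<noteq> v"
    show "\<not> max_ec_le k W (add_edge h u v)"
    proof
      assume me: "max_ec_le k W (add_edge h u v)"
      have finW: "finite W" using Wh(2) by (simp add: multigraph_def)
      have "num_edges W (add_edge h u v) \<in> ?A"
        unfolding mem_Collect_eq
        by (intro exI conjI refl) (use add_edge_multigraph[OF Wh(2) u v uv] Wh(3) me in simp_all)
      then have "num_edges W (add_edge h u v) \<le> Max ?A" by (rule Max_ge[OF fin])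
      moreover have "num_edges W (add_edge h u v) = num_edges W h + 1"
        unfolding num_edges_cut add_edge_cut_all[OF finW u v uv] by simp
      ultimately show False using Wh(1) by simp
    qed
  qed
  have "cut_size h W W = 2 * k * (n - 1)" using maximal_count[OF Wh(2) km] Wh(3) by simp
  then have "Max ?A = k * (n - 1)" using Wh(1) by (simp add: num_edges_cut)
  moreover have "Sup ?A = Max ?A" using fin neA by (rule cSup_eq_Max)
  ultimately show ?thesis unfolding F_max_def by simp
qed

theorem lemma3p5:
  fixes V :: "'a set" and m :: "'a \<Rightarrow> 'a \<Rightarrow> nat" and n k :: nat
  assumes "k > 0" and "n > 0" and "multigraph V m" and "card V = n"
  shows "in_F_family n k V m \<longleftrightarrow> k_maximal k V m"
proof
  assume F: "in_F_family n k V m"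
  then have me: "max_ec_le k V m" and ne: "num_edges V m = k * (n - 1)"
    by (auto simp: in_F_family_def F_max_val)
  have fin: "finite V" using assms(3) by (simp add: multigraph_def)
  have "\<not> max_ec_le k V (add_edge m u v)" if u: "u \<in> V" and v: "v \<in> V" and uv: "u \<noteq> v" for u v
  proof
    assume me2: "max_ec_le k V (add_edge m u v)"
    have "cut_size (add_edge m u v) V V \<le> 2 * k * (card V - 1)"
      using upper_bound[OF add_edge_multigraph[OF assms(3) u v uv] me2] .
    then have "cut_size m V V + 2 \<le> 2 * k * (n - 1)"
      using add_edge_cut_all[OF fin u v uv] assms(4) by simp
    moreover have "cut_size m V V div 2 = k * (n - 1)" using ne by (simp add: num_edges_cut)
    ultimately show False by linarith
  qed
  then show "k_maximal k V m" using me by (simp add: k_maximal_def)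
next
  assume km: "k_maximal k V m"
  have "cut_size m V V = 2 * k * (n - 1)" using maximal_count[OF assms(3) km] assms(4) by simp
  then have "num_edges V m = F_max n k" by (simp add: num_edges_cut F_max_val)
  then show "in_F_family n k V m" using km assms(3,4) by (simp add: in_F_family_def k_maximal_def)
qed

end
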